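(* Let $G$ be an exceptional graph with root $r$, and let $\{x,y\}=V_2(G)\setminus\{r\}$. Then one of the following holds: (i) $x$ and $y$ are non-adjacent, have the same neighborhood (they are $2$-twins), and $L_G(x,y)\equiv\{1,2\}\pmod 3$; (ii) $x$ and $y$ are adjacent and $L_G(x,y)\equiv\{0,1\}\pmod 3$. Moreover, if $G\neq K_{2,3}$, then $\{0,2\}\subseteq L_{G-y}(r,x)\pmod 3$ and $\{0,2\}\subseteq L_{G-x}(r,y)\pmod 3$.
   Context: All graphs are finite and simple. $V_2(H)$ is the set of degree-$2$ vertices of $H$. For distinct vertices $u,w$ of a graph $H$, $L_H(u,w)$ is the set of lengths (numbers of edges) of all $(u,w)$-paths in $H$. For sets of integers $A,B$, $A\subseteq B\pmod k$ means every $a\in A$ is congruent mod $k$ to some $b\in B$, and $A\equiv B\pmod k$ means both $A\subseteq B\pmod k$ and $B\subseteq A\pmod k$. Exceptional graphs: let $r$ be a degree-$2$ vertex of $G$. $G$ is an exceptional graph with root $r$ if there is a sequence $(G_0,x_0,y_0),\ldots,(G_n,x_n,y_n)$, $n\ge 0$, with $G_0=K_{2,3}$, $G_n=G$, such that for each $i$ the vertices $r,x_i,y_i$ are distinct degree-$2$ vertices of $G_i$, and for each $i<n$: (1) if $x_iy_i\notin E(G_i)$, $G_{i+1}$ is obtained from $G_i$ by adding a new path of length $3$ joining $x_i$ and $y_i$; (2) if $x_iy_i\in E(G_i)$, $G_{i+1}$ is obtained from $G_i$ either by adding a new vertex $v$ with $N_{G_{i+1}}(v)=N_{G_i}(w)$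 for some $w\in\{x_i,y_i\}$, or by adding a new $4$-cycle $abcda$ and the edges $ax_i,cy_i$. (Every such graph has exactly three degree-$2$ vertices.) *)

theory Defs
  imports Main
begin

text \<open>A finite simple graph is given by a vertex set V and a set E of edges,
each edge being a two-element subset of V.\<close>

definition nbrs :: "'a set set \<Rightarrow> 'a \<Rightarrow> 'a set" where
  "nbrs E v = {w. {v, w} \<in> E}"

definition deg :: "'a set set \<Rightarrow> 'a \<Rightarrow> nat" where
  "deg E v = card (nbrs E v)"

definition V2 :: "'a set \<Rightarrow> 'a set set \<Rightarrow> 'a set" where
  "V2 V E = {v \<in> V. deg E v = 2}"

definition is_path :: "'a set \<Rightarrow> 'a set set \<Rightarrow> 'a list \<Rightarrow> bool" where
  "is_path V E p \<longleftrightarrow> p \<noteq> [] \<and> distinct p \<and> set p \<subseteq> V \<and>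
     (\<forall>i. Suc i < length p \<longrightarrow> {p ! i, p ! Suc i} \<in> E)"

definition path_lengths :: "'a set \<Rightarrow> 'a set set \<Rightarrow> 'a \<Rightarrow> 'a \<Rightarrow> nat set" where
  "path_lengths V E u w =
     {length p - 1 | p. is_path V E p \<and> hd p = u \<and> last p = w}"

definition del_vertex_edges :: "'a \<Rightarrow> 'a set set \<Rightarrow> 'a set set" where
  "del_vertex_edges v E = {e \<in> E. v \<notin> e}"

definition subset_mod :: "nat \<Rightarrow> nat set \<Rightarrow> nat set \<Rightarrow> bool" where
  "subset_mod k A B \<longleftrightarrow> (\<forall>a\<in>A. \<exists>b\<in>B. a mod k = b mod k)"

definition equiv_mod :: "nat \<Rightarrow> nat set \<Rightarrow> nat set \<Rightarrow> bool" where
  "equiv_mod k A B \<longleftrightarrow> subset_mod k A B \<and> subset_mod k B A"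

definition K23_on :: "'a set \<Rightarrow> 'a set set \<Rightarrow> 'a \<Rightarrow> 'a \<Rightarrow> 'a \<Rightarrow> 'a \<Rightarrow> 'a \<Rightarrow> bool" where
  "K23_on V E a1 a2 b1 b2 b3 \<longleftrightarrow>
     distinct [a1, a2, b1, b2, b3] \<and> V = {a1, a2, b1, b2, b3} \<and>
     E = {{a, b} | a b. a \<in> {a1, a2} \<and> b \<in> {b1, b2, b3}}"

definition is_K23 :: "'a set \<Rightarrow> 'a set set \<Rightarrow> bool" where
  "is_K23 V E \<longleftrightarrow> (\<exists>a1 a2 b1 b2 b3. K23_on V E a1 a2 b1 b2 b3)"

text \<open>One step G_i -> G_{i+1} of the construction of exceptional graphs with root r,
  using the distinct degree-2 vertices r, x, y of G_i.\<close>
definition exc_step :: "'a \<Rightarrow> 'a \<Rightarrow> 'a \<Rightarrow> 'a set \<Rightarrow> 'a set set \<Rightarrow> 'a set \<Rightarrow> 'a set set \<Rightarrow> bool" where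
  "exc_step r x y V E V' E' \<longleftrightarrow>
     distinct [r, x, y] \<and> r \<in> V2 V E \<and> x \<in> V2 V E \<and> y \<in> V2 V E \<and>
     ( ({x, y} \<notin> E \<and>
         (\<exists>p q. p \<notin> V \<and> q \<notin> V \<and> p \<noteq> q \<and> V' = V \<union> {p, q} \<and>
                E' = E \<union> {{x, p}, {p, q}, {q, y}}))
     \<or> ({x, y} \<in> E \<and>
         ((\<exists>v w. v \<notin> V \<and> w \<in> {x, y} \<and> V' = insert v V \<and>
                 E' = E \<union> {{v, u} | u. u \<in> nbrs E w})
          \<or> (\<exists>a b c d. distinct [a, b, c, d] \<and> {a, b, c, d} \<inter> V = {} \<and>
                 V' = V \<union> {a, b, c, d} \<and>
                 E' = E \<union> {{a, b}, {b, c}, {c, d}, {d, a}, {a, x}, {c, y}}))))"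

inductive exc_reach :: "'a \<Rightarrow> 'a set \<Rightarrow> 'a set set \<Rightarrow> bool" for r where
  base: "K23_on V E a1 a2 b1 b2 b3 \<Longrightarrow> exc_reach r V E"
| step: "exc_reach r V E \<Longrightarrow> exc_step r x y V E V' E' \<Longrightarrow> exc_reach r V' E'"

text \<open>G is exceptional with root r: the last graph G_n of such a sequence, in which
  r, x_n, y_n are again distinct degree-2 vertices.\<close>
definition exceptional :: "'a set \<Rightarrow> 'a set set \<Rightarrow> 'a \<Rightarrow> bool" where
  "exceptional V E r \<longleftrightarrow> exc_reach r V E \<and>
     (\<exists>x y. distinct [r, x, y] \<and> r \<in> V2 V E \<and> x \<in> V2 V E \<and> y \<in> V2 V E)"

end

theory Submission
  imports Defs
begin


fun walk :: "'a set set \<Rightarrow> 'a list \<Rightarrow> bool" where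
  "walk E [] = True"
| "walk E [a] = True"
| "walk E (a # b # t) = ({a, b} \<in> E \<and> walk E (b # t))"

lemma walk_nth: "(\<forall>i. Suc i < length p \<longrightarrow> {p ! i, p ! Suc i} \<in> E) \<longleftrightarrow> walk E p"
proof (induction E p rule: walk.induct)
  case (3 E a b t)
  show ?case
  proof
    assume H: "\<forall>i. Suc i < length (a # b # t) \<longrightarrow> {(a # b # t) ! i, (a # b # t) ! Suc i} \<in> E"
    have "{a,b} \<in> E" using H[rule_format, of 0] by simp
    moreover have "\<forall>i. Suc i < length (b # t) \<longrightarrow> {(b # t) ! i, (b # t) ! Suc i} \<in> E"
      using H by (metis Suc_less_eq length_Cons nth_Cons_Suc)
    ultimately show "walk E (a # b # t)" using 3 by simp
  next
    assume "walk E (a # b # t)"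
    then have "{a,b} \<in> E" "\<forall>i. Suc i < length (b # t) \<longrightarrow> {(b # t) ! i, (b # t) ! Suc i} \<in> E"
      using 3 by auto
    then show "\<forall>i. Suc i < length (a # b # t) \<longrightarrow> {(a # b # t) ! i, (a # b # t) ! Suc i} \<in> E"
      by (metis One_nat_def Suc_less_eq length_Cons less_Suc_eq_0_disj nth_Cons_0 nth_Cons_Suc)
  qed
qed auto

lemma is_path_walk: "is_path V E p \<longleftrightarrow> p \<noteq> [] \<and> distinct p \<and> set p \<subseteq> V \<and> walk E p"
  unfolding is_path_def walk_nth by blast

lemma walk_Cons: "walk E (a # ys) \<longleftrightarrow> walk E ys \<and> (ys \<noteq> [] \<longrightarrow> {a, hd ys} \<in> E)"
  by (cases ys) auto

lemma walk_append: "walk E (xs @ ys) \<longleftrightarrow> walk E xs \<and> walk E ys \<and> (xs \<noteq> [] \<longrightarrow> ys \<noteq> [] \<longrightarrow> {last xs, hd ys} \<in> E)"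
  by (induction xs) (auto simp: walk_Cons)

lemma walk_rev: "walk E (rev xs) \<longleftrightarrow> walk E xs"
  by (induction xs) (auto simp: walk_Cons walk_append hd_rev last_rev insert_commute)

lemma walk_mono: "walk E xs \<Longrightarrow> E \<subseteq> E' \<Longrightarrow> walk E' xs"
  by (induction xs) (auto simp: walk_Cons)

lemma walk_restrict: "walk (E \<union> F) xs \<Longrightarrow> set xs \<inter> N = {} \<Longrightarrow> (\<forall>a b. {a,b} \<in> F \<longrightarrow> a \<in> N \<or> b \<in> N) \<Longrightarrow> walk E xs"
proof (induction xs)
  case (Cons a xs)
  then show ?case
  proof (cases xs)
    case (Cons b ys)
    have "{a,b} \<in> E \<union> F" using Cons.prems Cons by simp
    moreover have "a \<notin> N" "b \<notin> N" using Cons.prems Cons by auto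
    ultimately have "{a,b} \<in> E" using Cons.prems by blast
    then show ?thesis using Cons.prems Cons.IH Cons by auto
  qed simp
qed simp

lemma walk_dve: "walk E xs \<Longrightarrow> y \<notin> set xs \<Longrightarrow> walk (del_vertex_edges y E) xs"
proof (induction xs)
  case (Cons a xs)
  then show ?case
    by (cases xs) (auto simp: walk_Cons del_vertex_edges_def)
qed simp

lemma dve_sub: "del_vertex_edges y E \<subseteq> E" unfolding del_vertex_edges_def by auto

lemma is_path_rev: "is_path V E p \<Longrightarrow> is_path V E (rev p)"
  by (simp add: is_path_walk walk_rev)

lemma is_path_mono: "is_path V E p \<Longrightarrow> V \<subseteq> V' \<Longrightarrow> E \<subseteq> E' \<Longrightarrow> is_path V' E' p"
  by (auto simp: is_path_walk walk_mono)

lemma is_path_dve: "is_path V E p \<Longrightarrow> y \<notin> set p \<Longrightarrow> is_path (V - {y}) (del_vertex_edges y E) p"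
  by (auto simp: is_path_walk walk_dve)

definition HL :: "'a set \<Rightarrow> 'a set set \<Rightarrow> 'a \<Rightarrow> 'a \<Rightarrow> nat \<Rightarrow> bool" where
  "HL V E u w k \<longleftrightarrow> (\<exists>p. is_path V E p \<and> hd p = u \<and> last p = w \<and> (length p - 1) mod 3 = k)"

definition NO :: "'a set \<Rightarrow> 'a set set \<Rightarrow> 'a \<Rightarrow> 'a \<Rightarrow> nat \<Rightarrow> bool" where
  "NO V E u w k \<longleftrightarrow> (\<forall>p. is_path V E p \<longrightarrow> hd p = u \<longrightarrow> last p = w \<longrightarrow> (length p - 1) mod 3 \<noteq> k)"

lemma HL_mono: "HL V E u w k \<Longrightarrow> V \<subseteq> V' \<Longrightarrow> E \<subseteq> E' \<Longrightarrow> HL V' E' u w k"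
  unfolding HL_def using is_path_mono by blast

lemma HL_dve: "HL (V - {y}) (del_vertex_edges y E) u w k \<Longrightarrow> HL V E u w k"
  using HL_mono dve_sub by (metis Diff_subset)

lemma HL_sym: "HL V E u w k \<Longrightarrow> HL V E w u k"
  unfolding HL_def
  by (metis is_path_rev is_path_walk hd_rev last_rev length_rev)

lemma NO_sym: "NO V E u w k \<Longrightarrow> NO V E w u k"
  unfolding NO_def
  by (metis is_path_rev is_path_walk hd_rev last_rev length_rev rev_rev_ident)

definition wfg :: "'a set \<Rightarrow> 'a set set \<Rightarrow> bool" where
  "wfg V E \<longleftrightarrow> finite V \<and> (\<forall>e\<in>E. \<exists>a b. e = {a,b} \<and> a \<noteq> b \<and> a \<in> V \<and> b \<in> V)"

lemma wfg_edge: "wfg V E \<Longrightarrow> {a,b} \<in> E \<Longrightarrow> a \<in> V \<and> b \<in> V \<and> a \<noteq> b"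
  unfolding wfg_def by (metis doubleton_eq_iff)

lemma nbrs_sub: "wfg V E \<Longrightarrow> nbrs E u \<subseteq> V"
  unfolding nbrs_def using wfg_edge by fastforce

lemma nbrs_fin: "wfg V E \<Longrightarrow> finite (nbrs E u)"
  using nbrs_sub wfg_def finite_subset by metis

lemma nbrs_irr: "wfg V E \<Longrightarrow> u \<notin> nbrs E u"
  unfolding nbrs_def using wfg_edge by fastforce

lemma nbrs_out: "wfg V E \<Longrightarrow> u \<notin> V \<Longrightarrow> nbrs E u = {}"
  unfolding nbrs_def using wfg_edge by fastforce

lemma nbrs_union: "nbrs (E \<union> F) u = nbrs E u \<union> nbrs F u"
  unfolding nbrs_def by auto

lemma nbrs_insert: "nbrs (insert {a,b} F) u = (if u = a then {b} else {}) \<union> (if u = b then {a} else {}) \<union> nbrs F u"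
  unfolding nbrs_def by (auto simp: doubleton_eq_iff)

lemma nbrs_empty: "nbrs {} u = {}" unfolding nbrs_def by auto

lemma mem_nbrs: "w \<in> nbrs E u \<longleftrightarrow> {u,w} \<in> E" unfolding nbrs_def by auto


definition BB :: "'a \<Rightarrow> 'a set \<Rightarrow> 'a set set \<Rightarrow> 'a \<Rightarrow> 'a \<Rightarrow> bool" where
  "BB r V E x y \<longleftrightarrow> HL (V-{y}) (del_vertex_edges y E) r x 0 \<and> HL (V-{y}) (del_vertex_edges y E) r x 2
     \<and> HL (V-{x}) (del_vertex_edges x E) r y 0 \<and> HL (V-{x}) (del_vertex_edges x E) r y 2"

definition Inv :: "'a \<Rightarrow> 'a set \<Rightarrow> 'a set set \<Rightarrow> 'a \<Rightarrow> 'a \<Rightarrow> bool" where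
  "Inv r V E x y \<longleftrightarrow> wfg V E \<and> distinct [r,x,y] \<and> r \<in> V \<and> x \<in> V \<and> y \<in> V \<and>
     deg E r = 2 \<and> deg E x = 2 \<and> deg E y = 2 \<and> (\<forall>u\<in>V. u \<notin> {r,x,y} \<longrightarrow> deg E u \<ge> 3) \<and>
     (({x,y} \<notin> E \<and> nbrs E x = nbrs E y \<and> HL V E x y 1 \<and> HL V E x y 2 \<and> NO V E x y 0 \<and>
        HL V E r x 1 \<and> HL V E r x 2 \<and> HL V E r y 1 \<and> HL V E r y 2 \<and> (\<not> is_K23 V E \<longrightarrow> BB r V E x y))
      \<or> ({x,y} \<in> E \<and> HL V E x y 0 \<and> HL V E x y 1 \<and> NO V E x y 2 \<and> BB r V E x y))"

lemma BB_sym: "BB r V E x y \<Longrightarrow> BB r V E y x"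
  unfolding BB_def by blast

lemma Inv_sym: assumes "Inv r V E x y" shows "Inv r V E y x"
proof -
  have s: "{y,x} = {x,y}" "{r,y,x} = {r,x,y}" by auto
  have s2: "distinct [r,y,x] = distinct [r,x,y]" by auto
  have h1: "\<And>k. HL V E y x k = HL V E x y k" by (rule iffI; erule HL_sym)
  have h2: "\<And>k. NO V E y x k = NO V E x y k" by (rule iffI; erule NO_sym)
  have h3: "BB r V E y x = BB r V E x y" by (rule iffI; erule BB_sym)
  note h = h1 h2 h3
  show ?thesis using assms unfolding Inv_def s s2 h by metis
qed

lemma Inv_V2: "Inv r V E x y \<Longrightarrow> V2 V E = {r,x,y}"
  unfolding Inv_def V2_def by force

lemma K23_base:
  assumes "K23_on V E a1 a2 b1 b2 b3"
  shows "Inv b1 V E b2 b3"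
proof -
  have d: "distinct [a1, a2, b1, b2, b3]" and V: "V = {a1, a2, b1, b2, b3}"
    and E0: "E = {{a, b} | a b. a \<in> {a1, a2} \<and> b \<in> {b1, b2, b3}}"
    using assms unfolding K23_on_def by auto
  have E: "E = {{a1,b1},{a1,b2},{a1,b3},{a2,b1},{a2,b2},{a2,b3}}"
    unfolding E0 by auto
  have wf: "wfg V E" unfolding wfg_def V E using d by auto
  have n: "nbrs E b1 = {a1,a2}" "nbrs E b2 = {a1,a2}" "nbrs E b3 = {a1,a2}"
     "nbrs E a1 = {b1,b2,b3}" "nbrs E a2 = {b1,b2,b3}"
    unfolding E using d by (auto simp: nbrs_insert nbrs_empty)
  have dg: "deg E b1 = 2" "deg E b2 = 2" "deg E b3 = 2" "deg E a1 = 3" "deg E a2 = 3"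
    unfolding deg_def n using d by auto
  have K: "is_K23 V E" unfolding is_K23_def using assms by blast
  have e: "{b2,b3} \<notin> E" unfolding E using d by (auto simp: doubleton_eq_iff)
  have p1: "HL V E b2 b3 2" unfolding HL_def
    by (rule exI[of _ "[b2,a1,b3]"]) (use d in \<open>auto simp: is_path_walk V E\<close>)
  have p2: "HL V E b2 b3 1" unfolding HL_def
    by (rule exI[of _ "[b2,a1,b1,a2,b3]"]) (use d in \<open>auto simp: is_path_walk V E\<close>)
  have p3: "HL V E b1 b2 2" unfolding HL_def
    by (rule exI[of _ "[b1,a1,b2]"]) (use d in \<open>auto simp: is_path_walk V E\<close>)
  have p4: "HL V E b1 b2 1" unfolding HL_def
    by (rule exI[of _ "[b1,a1,b3,a2,b2]"]) (use d in \<open>auto simp: is_path_walk V E\<close>)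
  have p5: "HL V E b1 b3 2" unfolding HL_def
    by (rule exI[of _ "[b1,a1,b3]"]) (use d in \<open>auto simp: is_path_walk V E\<close>)
  have p6: "HL V E b1 b3 1" unfolding HL_def
    by (rule exI[of _ "[b1,a1,b2,a2,b3]"]) (use d in \<open>auto simp: is_path_walk V E\<close>)
  have no: "NO V E b2 b3 0" unfolding NO_def
  proof (intro allI impI)
    fix p assume P: "is_path V E p" "hd p = b2" "last p = b3"
    have "length p = card (set p)" using P(1) by (simp add: is_path_walk distinct_card)
    also have "\<dots> \<le> card V" using P(1) by (intro card_mono) (auto simp: V is_path_walk)
    also have "card V = 5" using d V by simp
    finally have le: "length p \<le> 5" .
    show "(length p - 1) mod 3 \<noteq> 0"
    proof
      assume m: "(length p - 1) mod 3 = 0"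
      have "p \<noteq> []" using P by (simp add: is_path_walk)
      then have "length p = 1 \<or> length p = 4" using le m
        by (cases "length p") (auto simp: less_Suc_eq_le[symmetric] less_Suc_eq)
      then show False
      proof
        assume "length p = 1"
        then obtain c where "p = [c]" by (auto simp: length_Suc_conv)
        then show False using P d by simp
      next
        assume "length p = 4"
        then obtain c0 c1 c2 c3 where pc: "p = [c0,c1,c2,c3]"
          by (auto simp: length_Suc_conv numeral_eq_Suc)
        then show False using P d unfolding is_path_walk E
          by (auto simp: doubleton_eq_iff)
      qed
    qed
  qed
  have all3: "\<forall>u\<in>V. u \<notin> {b1,b2,b3} \<longrightarrow> deg E u \<ge> 3" using dg V by auto
  have Nn: "nbrs E b2 = nbrs E b3" using n by simp
  have Nk: "\<not> is_K23 V E \<longrightarrow> BB b1 V E b2 b3" using K by simp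
  have inV: "b1 \<in> V" "b2 \<in> V" "b3 \<in> V" using V by auto
  have dd: "distinct [b1,b2,b3]" using d by simp
  show ?thesis unfolding Inv_def
    by (intro conjI disjI1; (rule wf dd inV dg all3 e Nn p1 p2 p3 p4 p5 p6 no Nk)?)
qed


lemma path_decomp:
  assumes "is_path V E s" "hd s = u" "last s = w" "u \<noteq> w"
  obtains m where "s = u # m @ [w]"
proof -
  have "s \<noteq> []" using assms by (simp add: is_path_walk)
  then obtain t where s: "s = u # t" using assms(2) by (cases s) auto
  have "t \<noteq> []" using s assms by auto
  then have "t = butlast t @ [w]" using s assms(3) by auto
  then show ?thesis using that s by metis
qed

lemma path3:
  "is_path V E (u # m @ [w]) \<longleftrightarrow> distinct (u # m @ [w]) \<and> set (u # m @ [w]) \<subseteq> V \<and>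
     (m = [] \<longrightarrow> {u,w} \<in> E) \<and> (m \<noteq> [] \<longrightarrow> {u, hd m} \<in> E \<and> walk E m \<and> {last m, w} \<in> E)"
  by (cases "m = []") (auto simp: is_path_walk walk_Cons walk_append)

lemma HL_ext1:
  assumes "HL V E u w k" "z \<notin> V" "d \<notin> V" "d \<noteq> z" "{w,z} \<in> E'" "E \<subseteq> E'" "insert z V \<subseteq> V'"
  shows "HL (V' - {d}) (del_vertex_edges d E') u z ((k+1) mod 3)"
proof -
  obtain P where P: "is_path V E P" "hd P = u" "last P = w" "(length P - 1) mod 3 = k"
    using assms(1) unfolding HL_def by blast
  have "is_path V' E' (P @ [z])" using P assms
    by (auto simp: is_path_walk walk_append walk_mono)
  moreover have "d \<notin> set (P @ [z])" using P assms by (auto simp: is_path_walk)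
  ultimately have "is_path (V' - {d}) (del_vertex_edges d E') (P @ [z])" by (rule is_path_dve)
  moreover have "P \<noteq> []" using P by (simp add: is_path_walk)
  ultimately show ?thesis unfolding HL_def using P
    by (intro exI[of _ "P @ [z]"]) (auto simp: mod_Suc_eq)
qed

lemma HL_ext2:
  assumes "HL V E u w k" "z \<notin> V" "z2 \<notin> V" "z \<noteq> z2" "d \<notin> V" "d \<noteq> z" "d \<noteq> z2"
    "{w,z} \<in> E'" "{z,z2} \<in> E'" "E \<subseteq> E'" "V \<union> {z,z2} \<subseteq> V'"
  shows "HL (V' - {d}) (del_vertex_edges d E') u z2 ((k+2) mod 3)"
proof -
  obtain P where P: "is_path V E P" "hd P = u" "last P = w" "(length P - 1) mod 3 = k"
    using assms(1) unfolding HL_def by blast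
  have "is_path V' E' (P @ [z, z2])" using P assms
    by (auto simp: is_path_walk walk_append walk_mono)
  moreover have "d \<notin> set (P @ [z, z2])" using P assms by (auto simp: is_path_walk)
  ultimately have "is_path (V' - {d}) (del_vertex_edges d E') (P @ [z, z2])" by (rule is_path_dve)
  moreover have "P \<noteq> []" using P by (simp add: is_path_walk)
  moreover have "(length (P @ [z, z2]) - 1) mod 3 = (k+2) mod 3"
  proof -
    have "length (P @ [z, z2]) - 1 = (length P - 1) + 2" using \<open>P \<noteq> []\<close> by (cases P) auto
    moreover have "((length P - 1) + 2) mod 3 = ((length P - 1) mod 3 + 2) mod 3"
      by (rule mod_add_left_eq[symmetric])
    ultimately show ?thesis using P(4) by simp
  qed
  ultimately show ?thesis unfolding HL_def using P
    by (intro exI[of _ "P @ [z, z2]"]) auto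
qed

lemma HL_twin:
  assumes "HL V E u w k" "u \<noteq> w" "v \<notin> V" "E \<subseteq> E'" "\<forall>t\<in>nbrs E w. {t,v} \<in> E'" "insert v V \<subseteq> V'"
  shows "HL (V' - {w}) (del_vertex_edges w E') u v k"
proof -
  obtain P where P: "is_path V E P" "hd P = u" "last P = w" "(length P - 1) mod 3 = k"
    using assms(1) unfolding HL_def by blast
  obtain m where m: "P = u # m @ [w]" using path_decomp[OF P(1-3) assms(2)] by blast
  let ?Q = "u # m @ [v]"
  have Pm: "distinct (u # m @ [w])" "set (u # m @ [w]) \<subseteq> V"
     "(m = [] \<longrightarrow> {u,w} \<in> E)" "(m \<noteq> [] \<longrightarrow> {u, hd m} \<in> E \<and> walk E m \<and> {last m, w} \<in> E)"
    using P(1) unfolding m path3 by auto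
  have "is_path V' E' ?Q" unfolding path3
  proof (intro conjI impI)
    show "distinct ?Q" using Pm assms(3) by auto
    show "set ?Q \<subseteq> V'" using Pm assms(6) by auto
    show "{u,v} \<in> E'" if "m = []"
      using Pm(3) that assms(5) by (auto simp: mem_nbrs insert_commute)
    show "{u, hd m} \<in> E'" if "m \<noteq> []" using Pm(4) that assms(4) by auto
    show "walk E' m" if "m \<noteq> []" using Pm(4) that assms(4) walk_mono by blast
    show "{last m, v} \<in> E'" if "m \<noteq> []"
      using Pm(4) that assms(5) by (auto simp: mem_nbrs insert_commute)
  qed
  moreover have "w \<notin> set ?Q" using Pm assms by auto
  ultimately have "is_path (V' - {w}) (del_vertex_edges w E') ?Q" by (rule is_path_dve)
  then show ?thesis unfolding HL_def using P m by (intro exI[of _ ?Q]) auto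
qed


lemma m3a: "(n::nat) mod 3 \<noteq> 0 \<Longrightarrow> (n + 2) mod 3 \<noteq> 2" by presburger
lemma m3b: "(n::nat) mod 3 \<noteq> 2 \<Longrightarrow> (n + 1) mod 3 \<noteq> 0" by presburger
lemma m3c: "(n::nat) mod 3 \<noteq> 2 \<Longrightarrow> (n + 4) mod 3 \<noteq> 0" by presburger
lemma m3d: "(n::nat) mod 3 = 1 \<Longrightarrow> (n + 2) mod 3 = 0" by presburger
lemma m3e: "(n::nat) mod 3 = 0 \<Longrightarrow> (n + 4) mod 3 = 1" by presburger

lemma wfg_extend: "wfg V E \<Longrightarrow> finite V' \<Longrightarrow> V \<subseteq> V' \<Longrightarrow>
   (\<forall>e\<in>F. \<exists>a b. e = {a,b} \<and> a \<noteq> b \<and> a \<in> V' \<and> b \<in> V') \<Longrightarrow> wfg V' (E \<union> F)"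
proof -
  assume w: "wfg V E" and f: "finite V'" and s: "V \<subseteq> V'"
    and F: "\<forall>e\<in>F. \<exists>a b. e = {a,b} \<and> a \<noteq> b \<and> a \<in> V' \<and> b \<in> V'"
  have "\<forall>e\<in>E. \<exists>a b. e = {a,b} \<and> a \<noteq> b \<and> a \<in> V' \<and> b \<in> V'"
  proof
    fix e assume "e \<in> E"
    then obtain a b where "e = {a,b}" "a \<noteq> b" "a \<in> V" "b \<in> V" using w unfolding wfg_def by metis
    then show "\<exists>a b. e = {a,b} \<and> a \<noteq> b \<and> a \<in> V' \<and> b \<in> V'" using s by blast
  qed
  then show ?thesis using f F unfolding wfg_def by blast
qed

lemma card_ins3: "finite A \<Longrightarrow> card A = 2 \<Longrightarrow> p \<notin> A \<Longrightarrow> card (A \<union> {p}) = 3"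
  by simp

lemma step1:
  assumes I: "Inv r V E x y" and ne: "{x,y} \<notin> E" and pq: "p \<notin> V" "q \<notin> V" "p \<noteq> q"
    and V': "V' = V \<union> {p,q}" and E': "E' = E \<union> {{x,p},{p,q},{q,y}}"
  shows "Inv r V' E' p q"
proof -
  have wf: "wfg V E" and d: "distinct [r,x,y]" and inV: "r \<in> V" "x \<in> V" "y \<in> V"
    and dg: "deg E r = 2" "deg E x = 2" "deg E y = 2" and dg3: "\<forall>u\<in>V. u \<notin> {r,x,y} \<longrightarrow> deg E u \<ge> 3"
    using I unfolding Inv_def by auto
  have N: "HL V E x y 1" "HL V E x y 2" "NO V E x y 0"
        "HL V E r x 1" "HL V E r x 2" "HL V E r y 1" "HL V E r y 2"
    using I ne unfolding Inv_def by auto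
  have ds: "p \<noteq> x" "p \<noteq> y" "p \<noteq> r" "q \<noteq> x" "q \<noteq> y" "q \<noteq> r" "p \<noteq> q"
    using pq inV by auto
  have nE: "\<And>u. nbrs E' u = nbrs E u \<union> (if u = x then {p} else {}) \<union> (if u = p then {x,q} else {})
      \<union> (if u = q then {p,y} else {}) \<union> (if u = y then {q} else {})"
    unfolding E' nbrs_union by (auto simp: nbrs_insert nbrs_empty)
  have wf': "wfg V' E'" unfolding E'
    by (rule wfg_extend[OF wf]) (use wf inV pq ds V' in \<open>auto simp: wfg_def\<close>)
  have fin: "\<And>u. finite (nbrs E u)" using nbrs_fin[OF wf] .
  have pn: "\<And>u. p \<notin> nbrs E u" "\<And>u. q \<notin> nbrs E u" using nbrs_sub[OF wf] pq by auto
  have "nbrs E' r = nbrs E r" using nE[of r] d ds by auto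
  then have dr: "deg E' r = 2" using dg by (simp add: deg_def)
  have "nbrs E' p = {x,q}" using nE[of p] ds nbrs_out[OF wf pq(1)] by auto
  then have dp: "deg E' p = 2" using ds by (simp add: deg_def)
  have "nbrs E' q = {p,y}" using nE[of q] ds pq nbrs_out[OF wf pq(2)] by auto
  then have dq: "deg E' q = 2" using ds by (simp add: deg_def)
  have dx: "deg E' x = 3"
  proof -
    have "nbrs E' x = nbrs E x \<union> {p}" using nE[of x] d ds by auto
    then show ?thesis using card_ins3[OF fin dg(2)[unfolded deg_def] pn(1)] by (simp add: deg_def)
  qed
  have dy: "deg E' y = 3"
  proof -
    have "nbrs E' y = nbrs E y \<union> {q}" using nE[of y] d ds by auto
    then show ?thesis using card_ins3[OF fin dg(3)[unfolded deg_def] pn(2)] by (simp add: deg_def)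
  qed
  have dg3': "\<forall>u\<in>V'. u \<notin> {r,p,q} \<longrightarrow> deg E' u \<ge> 3"
  proof (intro ballI impI)
    fix u assume u: "u \<in> V'" "u \<notin> {r,p,q}"
    show "deg E' u \<ge> 3"
    proof (cases "u = x \<or> u = y")
      case True then show ?thesis using dx dy by auto
    next
      case False
      then have "nbrs E' u = nbrs E u" using nE[of u] u by auto
      then show ?thesis using dg3 u False V' by (auto simp: deg_def)
    qed
  qed
  have epq: "{p,q} \<in> E'" unfolding E' by auto
  have h1: "HL V' E' p q 1" unfolding HL_def
    by (rule exI[of _ "[p,q]"]) (use pq epq V' in \<open>auto simp: is_path_walk\<close>)
  have h0: "HL V' E' p q 0"
  proof -
    obtain P where P: "is_path V E P" "hd P = x" "last P = y" "(length P - 1) mod 3 = 1"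
      using N(1) unfolding HL_def by blast
    have Pw: "P \<noteq> []" "distinct P" "set P \<subseteq> V" "walk E' P"
      using P(1) walk_mono[of E P E'] E' by (auto simp: is_path_walk)
    let ?Q = "p # P @ [q]"
    have epx: "{p,x} \<in> E'" proof - have "{p,x} = {x,p}" by (rule insert_commute) then show ?thesis unfolding E' by simp qed
    have eyq: "{y,q} \<in> E'" proof - have "{y,q} = {q,y}" by (rule insert_commute) then show ?thesis unfolding E' by simp qed
    have "distinct ?Q" using Pw pq by auto
    moreover have "set ?Q \<subseteq> V'" using Pw V' by auto
    ultimately have "is_path V' E' ?Q" unfolding path3
      using Pw P(2,3) epx eyq by simp
    moreover have "(length ?Q - 1) mod 3 = 0" using m3d[OF P(4)] Pw(1) by (cases P) simp_all
    ultimately show ?thesis unfolding HL_def by (intro exI[of _ ?Q]) auto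
  qed
  have no: "NO V' E' p q 2" unfolding NO_def
  proof (intro allI impI)
    fix s assume s: "is_path V' E' s" "hd s = p" "last s = q"
    obtain m where m: "s = p # m @ [q]" using path_decomp[OF s] pq by auto
    have Sm: "distinct (p # m @ [q])" "set (p # m @ [q]) \<subseteq> V'"
     "(m \<noteq> [] \<longrightarrow> {p, hd m} \<in> E' \<and> walk E' m \<and> {last m, q} \<in> E')"
      using s(1) unfolding m path3 by auto
    show "(length s - 1) mod 3 \<noteq> 2"
    proof (cases "m = []")
      case True then show ?thesis using m by simp
    next
      case False
      have "hd m \<in> nbrs E' p" using Sm(3) False by (simp add: mem_nbrs)
      moreover have "hd m \<noteq> q" using Sm(1) False by (cases m) auto
      moreover have "nbrs E' p = {x,q}" using nE[of p] ds nbrs_out[OF wf pq(1)] by auto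
      ultimately have hm: "hd m = x" by auto
      have "last m \<in> nbrs E' q" using Sm(3) False by (simp add: mem_nbrs insert_commute)
      moreover have "last m \<noteq> p" using Sm(1) False by (cases m rule: rev_cases) auto
      moreover have "nbrs E' q = {p,y}" using nE[of q] ds pq nbrs_out[OF wf pq(2)] by auto
      ultimately have lm: "last m = y" by auto
      have "walk E m"
        by (rule walk_restrict[of E "{{x,p},{p,q},{q,y}}" m "{p,q}"])
           (use Sm(1) Sm(3) False E' in \<open>auto simp: doubleton_eq_iff\<close>)
      moreover have "set m \<subseteq> V" using Sm(1,2) V' by auto
      ultimately have "is_path V E m" using Sm(1) False by (simp add: is_path_walk)
      then have "(length m - 1) mod 3 \<noteq> 0" using N(3) hm lm unfolding NO_def by blast
      moreover have "length s - 1 = (length m - 1) + 2" using m False by (cases m) auto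
      ultimately show ?thesis using m3a by simp
    qed
  qed
  have sub: "E \<subseteq> E'" "insert p V \<subseteq> V'" "insert q V \<subseteq> V'" unfolding E' V' by auto
  have eyq: "{y,q} \<in> E'" proof - have "{y,q} = {q,y}" by (rule insert_commute) then show ?thesis unfolding E' by simp qed
  have exp: "{x,p} \<in> E'" unfolding E' by simp
  have b1: "HL (V' - {q}) (del_vertex_edges q E') r p 0"
    using HL_ext1[OF N(5) pq(1) pq(2) pq(3)[symmetric] exp sub(1,2)] by simp
  have b2: "HL (V' - {q}) (del_vertex_edges q E') r p 2"
    using HL_ext1[OF N(4) pq(1) pq(2) pq(3)[symmetric] exp sub(1,2)] by (simp add: numeral_2_eq_2)
  have b3: "HL (V' - {p}) (del_vertex_edges p E') r q 0"
    using HL_ext1[OF N(7) pq(2) pq(1) pq(3) eyq sub(1,3)] by simp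
  have b4: "HL (V' - {p}) (del_vertex_edges p E') r q 2"
    using HL_ext1[OF N(6) pq(2) pq(1) pq(3) eyq sub(1,3)] by (simp add: numeral_2_eq_2)
  have dist': "distinct [r,p,q]" using ds by simp
  have inV': "r \<in> V'" "p \<in> V'" "q \<in> V'" using inV V' by auto
  show ?thesis unfolding Inv_def BB_def
    by (intro conjI disjI2; (rule wf' dist' inV' dr dp dq dg3' epq h0 h1 no b1 b2 b3 b4)?)
qed


lemma HL_ext1':
  assumes "HL V E u w k" "z \<notin> V" "{w,z} \<in> E'" "E \<subseteq> E'" "insert z V \<subseteq> V'"
  shows "HL V' E' u z ((k+1) mod 3)"
proof -
  obtain P where P: "is_path V E P" "hd P = u" "last P = w" "(length P - 1) mod 3 = k"
    using assms(1) unfolding HL_def by blast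
  have "is_path V' E' (P @ [z])" using P assms
    by (auto simp: is_path_walk walk_append walk_mono)
  moreover have "P \<noteq> []" using P by (simp add: is_path_walk)
  ultimately show ?thesis unfolding HL_def using P
    by (intro exI[of _ "P @ [z]"]) (auto simp: mod_Suc_eq)
qed

lemma HL_mono_del: "HL V E u w k \<Longrightarrow> d \<notin> V \<Longrightarrow> V \<subseteq> V' \<Longrightarrow> E \<subseteq> E' \<Longrightarrow>
   HL (V' - {d}) (del_vertex_edges d E') u w k"
  unfolding HL_def by (metis is_path_dve is_path_mono is_path_walk subsetD)

lemma card2_cases: "card A = 2 \<Longrightarrow> a \<in> A \<Longrightarrow> b \<in> A \<Longrightarrow> c \<in> A \<Longrightarrow> a \<noteq> b \<Longrightarrow> c = a \<or> c = b"
  by (auto simp: card_2_iff)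

lemma hd_last_distinct: assumes "distinct m" "length m \<ge> 2" shows "hd m \<noteq> last m"
proof (cases m)
  case (Cons a l)
  then have "l \<noteq> []" using assms by auto
  then show ?thesis using Cons assms by auto
qed (use assms in auto)

lemma FULL_from_BB:
  assumes "BB r V E x y" "{x,y} \<in> E" "x \<in> V"
  shows "HL V E r x 0" "HL V E r x 1" "HL V E r x 2"
proof -
  show "HL V E r x 0" using assms(1) unfolding BB_def by (metis HL_dve)
  show "HL V E r x 2" using assms(1) unfolding BB_def by (metis HL_dve)
  have "HL (V - {x}) (del_vertex_edges x E) r y 0" using assms(1) unfolding BB_def by blast
  from HL_ext1'[OF this, of x E V] assms(2,3)
  show "HL V E r x 1" by (auto simp: dve_sub insert_commute)
qed

lemma step_twin:
  assumes I: "Inv r V E x y" and adj: "{x,y} \<in> E" and v: "v \<notin> V"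
    and V': "V' = insert v V" and E': "E' = E \<union> {{v, u} | u. u \<in> nbrs E x}"
    and dr: "deg E' r = 2"
  shows "Inv r V' E' x v"
proof -
  let ?F = "{{v, u} | u. u \<in> nbrs E x}"
  have wf: "wfg V E" and d: "distinct [r,x,y]" and inV: "r \<in> V" "x \<in> V" "y \<in> V"
    and dg: "deg E r = 2" "deg E x = 2" "deg E y = 2" and dg3: "\<forall>u\<in>V. u \<notin> {r,x,y} \<longrightarrow> deg E u \<ge> 3"
    using I unfolding Inv_def by auto
  have A: "HL V E x y 0" "HL V E x y 1" "NO V E x y 2" "BB r V E x y"
    using I adj unfolding Inv_def by auto
  have Bx: "HL V E r x 0" "HL V E r x 1" "HL V E r x 2" using FULL_from_BB[OF A(4) adj inV(2)] by auto
  have ns: "nbrs E x \<subseteq> V" using nbrs_sub[OF wf] .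
  have vn: "v \<notin> nbrs E x" using ns v by auto
  have yn: "y \<in> nbrs E x" using adj by (simp add: mem_nbrs)
  have fin: "\<And>u. finite (nbrs E u)" using nbrs_fin[OF wf] .
  have nE: "\<And>t. nbrs E' t = nbrs E t \<union> (if t = v then nbrs E x else {}) \<union> (if t \<in> nbrs E x then {v} else {})"
    unfolding E' nbrs_union using vn by (auto simp: nbrs_def doubleton_eq_iff)
  have Fv: "\<And>a b. {a,b} \<in> ?F \<Longrightarrow> a = v \<or> b = v" by (auto simp: doubleton_eq_iff)
  have EE: "\<And>a b. {a,b} \<in> E' \<Longrightarrow> a \<noteq> v \<Longrightarrow> b \<noteq> v \<Longrightarrow> {a,b} \<in> E"
    using Fv unfolding E' by blast
  have wf': "wfg V' E'" unfolding E'
  proof (rule wfg_extend[OF wf])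
    show "finite V'" "V \<subseteq> V'" using wf V' by (auto simp: wfg_def)
    show "\<forall>e\<in>?F. \<exists>a b. e = {a,b} \<and> a \<noteq> b \<and> a \<in> V' \<and> b \<in> V'"
    proof
      fix e assume "e \<in> ?F"
      then obtain u where "e = {v,u}" "u \<in> nbrs E x" by blast
      then show "\<exists>a b. e = {a,b} \<and> a \<noteq> b \<and> a \<in> V' \<and> b \<in> V'" using ns v V'
        by (intro exI[of _ v] exI[of _ u]) auto
    qed
  qed
  have nx: "nbrs E' x = nbrs E x" using nE[of x] nbrs_irr[OF wf, of x] v inV by auto
  have nv: "nbrs E' v = nbrs E x" using nE[of v] nbrs_out[OF wf v] vn by auto
  have dx: "deg E' x = 2" using nx dg by (simp add: deg_def)
  have dv: "deg E' v = 2" using nv dg by (simp add: deg_def)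
  have dg3': "\<forall>u\<in>V'. u \<notin> {r,x,v} \<longrightarrow> deg E' u \<ge> 3"
  proof (intro ballI impI)
    fix t assume t: "t \<in> V'" "t \<notin> {r,x,v}"
    then have tV: "t \<in> V" using V' by auto
    show "deg E' t \<ge> 3"
    proof (cases "t \<in> nbrs E x")
      case True
      then have "nbrs E' t = insert v (nbrs E t)" using nE[of t] t by auto
      moreover have "v \<notin> nbrs E t" using nbrs_sub[OF wf] v by auto
      ultimately have "deg E' t = Suc (deg E t)" using fin by (simp add: deg_def)
      moreover have "deg E t \<ge> 2" using dg dg3 tV t by (cases "t = y") auto
      ultimately show ?thesis by simp
    next
      case False
      then have "nbrs E' t = nbrs E t" using nE[of t] t by auto
      moreover have "t \<noteq> y" using False yn by auto
      ultimately show ?thesis using dg3 tV t by (auto simp: deg_def)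
    qed
  qed
  have nxv: "{x,v} \<notin> E'" using nx vn by (simp add: mem_nbrs[symmetric])
  have sub: "E \<subseteq> E'" "insert v V \<subseteq> V'" using E' V' by auto
  have yv: "{y,v} \<in> E'" using yn E' by auto
  have h2: "HL V' E' x v 2" unfolding HL_def
    by (rule exI[of _ "[x,y,v]"]) (use d v inV adj yv sub in \<open>auto simp: is_path_walk\<close>)
  have h1: "HL V' E' x v 1" using HL_ext1'[OF A(1) v yv sub] by simp
  have no: "NO V' E' x v 0" unfolding NO_def
  proof (intro allI impI)
    fix s assume s: "is_path V' E' s" "hd s = x" "last s = v"
    have xv: "x \<noteq> v" using v inV by auto
    obtain m where m: "s = x # m @ [v]" using path_decomp[OF s xv] by auto
    have Sm: "distinct (x # m @ [v])" "set (x # m @ [v]) \<subseteq> V'"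
     "(m = [] \<longrightarrow> {x,v} \<in> E')" "(m \<noteq> [] \<longrightarrow> {x, hd m} \<in> E' \<and> walk E' m \<and> {last m, v} \<in> E')"
      using s(1) unfolding m path3 by auto
    have mne: "m \<noteq> []" using Sm(3) nxv by auto
    have mV: "set m \<subseteq> V" using Sm(1,2) V' by auto
    have wm: "walk E m"
      by (rule walk_restrict[of E ?F m "{v}"]) (use Sm(1) Sm(4) mne E' Fv in auto)
    have hm: "{x, hd m} \<in> E" using EE Sm mne xv by (cases m) auto
    have lmv: "last m \<in> nbrs E x" using Sm(4) mne nv by (simp add: mem_nbrs[symmetric] insert_commute)
    have hmx: "hd m \<in> nbrs E x" using hm by (simp add: mem_nbrs)
    have t: "is_path V E (x # m)" using Sm(1) mV inV wm hm mne
      by (auto simp: is_path_walk walk_Cons)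
    have ls: "length s - 1 = (length (x # m) - 1) + 1" using m by simp
    show "(length s - 1) mod 3 \<noteq> 0"
    proof (cases "last m = y")
      case True
      then have "(length (x # m) - 1) mod 3 \<noteq> 2" using A(3) t mne unfolding NO_def by auto
      then show ?thesis using ls m3b by simp
    next
      case False
      show ?thesis
      proof (cases "length m \<ge> 2")
        case False
        have "length m \<noteq> 0" using mne by simp
        then have "length m = 1" using False by linarith
        then show ?thesis using m by simp
      next
        case True
        have "hd m \<noteq> last m" using hd_last_distinct Sm(1) True by auto
        then have hy: "hd m = y" using card2_cases[OF dg(2)[unfolded deg_def] lmv hmx yn] \<open>last m \<noteq> y\<close> by auto
        have t': "is_path V E (x # rev m)" using Sm(1) mV inV wm mne lmv
          by (auto simp: is_path_walk walk_Cons walk_rev hd_rev mem_nbrs)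
        have "last (x # rev m) = y" using hy mne by (simp add: last_rev)
        then have "(length (x # rev m) - 1) mod 3 \<noteq> 2" using A(3) t' unfolding NO_def by auto
        then show ?thesis using ls m3b by simp
      qed
    qed
  qed
  have tw: "\<forall>t\<in>nbrs E x. {t,v} \<in> E'" using E' by (auto simp: insert_commute)
  have rx: "r \<noteq> x" using d by simp
  have Tw: "\<And>k. HL V E r x k \<Longrightarrow> HL (V' - {x}) (del_vertex_edges x E') r v k"
    using HL_twin[OF _ rx v sub(1) tw sub(2)] by blast
  have Mx: "\<And>k. HL V E r x k \<Longrightarrow> HL (V' - {v}) (del_vertex_edges v E') r x k"
    using HL_mono_del[OF _ v _ sub(1)] V' by blast
  have r1: "HL V' E' r x 1" "HL V' E' r x 2" "HL V' E' r v 1" "HL V' E' r v 2"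
    using HL_dve[OF Mx[OF Bx(2)]] HL_dve[OF Mx[OF Bx(3)]] HL_dve[OF Tw[OF Bx(2)]] HL_dve[OF Tw[OF Bx(3)]]
    by simp_all
  have dist': "distinct [r,x,v]" using d v inV by auto
  have inV': "r \<in> V'" "x \<in> V'" "v \<in> V'" using inV V' by auto
  have nxv': "nbrs E' x = nbrs E' v" using nx nv by simp
  have bb: "HL (V' - {v}) (del_vertex_edges v E') r x 0" "HL (V' - {v}) (del_vertex_edges v E') r x 2"
     "HL (V' - {x}) (del_vertex_edges x E') r v 0" "HL (V' - {x}) (del_vertex_edges x E') r v 2"
    using Mx[OF Bx(1)] Mx[OF Bx(3)] Tw[OF Bx(1)] Tw[OF Bx(3)] by simp_all
  have bb': "\<not> is_K23 V' E' \<longrightarrow> BB r V' E' x v" unfolding BB_def using bb by blast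
  show ?thesis unfolding Inv_def
    by (intro conjI disjI1; (rule wf' dist' inV' dr dx dv dg3' nxv nxv' h1 h2 no r1 bb')?)
qed




lemma list_decomp:
  assumes "m \<noteq> []" "hd m = u" "last m = w" "u \<noteq> w"
  obtains m2 where "m = u # m2 @ [w]"
proof -
  obtain t where s: "m = u # t" using assms by (cases m) auto
  have "t \<noteq> []" using s assms by auto
  then have "t = butlast t @ [w]" using s assms(3) by auto
  then show ?thesis using that s by metis
qed

lemma walk3:
  "walk E (u # m @ [w]) \<longleftrightarrow> (m = [] \<longrightarrow> {u,w} \<in> E) \<and> (m \<noteq> [] \<longrightarrow> {u, hd m} \<in> E \<and> walk E m \<and> {last m, w} \<in> E)"
  by (cases "m = []") (auto simp: walk_Cons walk_append)

lemma step_cyc: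
  assumes I: "Inv r V E x y" and adj: "{x,y} \<in> E" and dist: "distinct [a,b,c,d]"
    and disj: "{a,b,c,d} \<inter> V = {}"
    and V': "V' = V \<union> {a,b,c,d}" and E': "E' = E \<union> {{a,b},{b,c},{c,d},{d,a},{a,x},{c,y}}"
  shows "Inv r V' E' b d"
proof -
  let ?F = "{{a,b},{b,c},{c,d},{d,a},{a,x},{c,y}}"
  have wf: "wfg V E" and dd: "distinct [r,x,y]" and inV: "r \<in> V" "x \<in> V" "y \<in> V"
    and dg: "deg E r = 2" "deg E x = 2" "deg E y = 2" and dg3: "\<forall>u\<in>V. u \<notin> {r,x,y} \<longrightarrow> deg E u \<ge> 3"
    using I unfolding Inv_def by auto
  have A: "HL V E x y 0" "HL V E x y 1" "NO V E x y 2" "BB r V E x y"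
    using I adj unfolding Inv_def by auto
  have Bx: "HL V E r x 0" "HL V E r x 1" "HL V E r x 2" using FULL_from_BB[OF A(4) adj inV(2)] by auto
  have nV: "a \<notin> V" "b \<notin> V" "c \<notin> V" "d \<notin> V" using disj by auto
  have ds: "a \<noteq> b" "a \<noteq> c" "a \<noteq> d" "b \<noteq> c" "b \<noteq> d" "c \<noteq> d" using dist by auto
  have ds2: "a \<noteq> x" "a \<noteq> y" "a \<noteq> r" "b \<noteq> x" "b \<noteq> y" "b \<noteq> r"
     "c \<noteq> x" "c \<noteq> y" "c \<noteq> r" "d \<noteq> x" "d \<noteq> y" "d \<noteq> r" using nV inV by auto
  have fin: "\<And>u. finite (nbrs E u)" using nbrs_fin[OF wf] .
  have nE: "\<And>t. nbrs E' t = nbrs E t \<union> (if t = a then {b,d,x} else {}) \<union> (if t = b then {a,c} else {})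
      \<union> (if t = c then {b,d,y} else {}) \<union> (if t = d then {c,a} else {})
      \<union> (if t = x then {a} else {}) \<union> (if t = y then {c} else {})"
    unfolding E' nbrs_union by (auto simp: nbrs_insert nbrs_empty)
  have na: "nbrs E' a = {b,d,x}" using nE[of a] ds ds2 nbrs_out[OF wf nV(1)] by auto
  have nb: "nbrs E' b = {a,c}" using nE[of b] ds ds2 nbrs_out[OF wf nV(2)] by auto
  have nc: "nbrs E' c = {b,d,y}" using nE[of c] ds ds2 nbrs_out[OF wf nV(3)] by auto
  have nd: "nbrs E' d = {a,c}" using nE[of d] ds ds2 nbrs_out[OF wf nV(4)] by auto
  have wf': "wfg V' E'" unfolding E'
    by (rule wfg_extend[OF wf]) (use wf inV nV ds ds2 V' in \<open>auto simp: wfg_def\<close>)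
  have pn: "\<And>u. a \<notin> nbrs E u" "\<And>u. c \<notin> nbrs E u" using nbrs_sub[OF wf] nV by auto
  have "nbrs E' r = nbrs E r" using nE[of r] dd ds2 by auto
  then have dr: "deg E' r = 2" using dg by (simp add: deg_def)
  have db: "deg E' b = 2" using nb ds by (simp add: deg_def)
  have ddd: "deg E' d = 2" using nd ds by (simp add: deg_def)
  have dx: "deg E' x = 3"
  proof -
    have "nbrs E' x = nbrs E x \<union> {a}" using nE[of x] dd ds2 by auto
    then show ?thesis using card_ins3[OF fin dg(2)[unfolded deg_def] pn(1)] by (simp add: deg_def)
  qed
  have dy: "deg E' y = 3"
  proof -
    have "nbrs E' y = nbrs E y \<union> {c}" using nE[of y] dd ds2 by auto
    then show ?thesis using card_ins3[OF fin dg(3)[unfolded deg_def] pn(2)] by (simp add: deg_def)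
  qed
  have dg3': "\<forall>u\<in>V'. u \<notin> {r,b,d} \<longrightarrow> deg E' u \<ge> 3"
  proof (intro ballI impI)
    fix u assume u: "u \<in> V'" "u \<notin> {r,b,d}"
    show "deg E' u \<ge> 3"
    proof (cases "u = x \<or> u = y \<or> u = a \<or> u = c")
      case True
      have "deg E' a = 3" using na ds ds2 by (simp add: deg_def)
      moreover have "deg E' c = 3" using nc ds ds2 by (simp add: deg_def)
      ultimately show ?thesis using True dx dy by (elim disjE) simp_all
    next
      case False
      then have "nbrs E' u = nbrs E u" using nE[of u] u by auto
      then show ?thesis using dg3 u False V' by (auto simp: deg_def)
    qed
  qed
  have nbd: "{b,d} \<notin> E'" using nb ds by (auto simp: mem_nbrs[symmetric])
  have sub: "E \<subseteq> E'" "V \<union> {a,b} \<subseteq> V'" "V \<union> {a,d} \<subseteq> V'" using E' V' by auto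
  have eba: "{b,a} \<in> E'" proof - have "{b,a} = {a,b}" by (rule insert_commute) then show ?thesis unfolding E' by simp qed
  have ead: "{a,d} \<in> E'" proof - have "{a,d} = {d,a}" by (rule insert_commute) then show ?thesis unfolding E' by simp qed
  have eax': "{a,x} \<in> E'" unfolding E' by simp
  have eyc: "{y,c} \<in> E'" proof - have "{y,c} = {c,y}" by (rule insert_commute) then show ?thesis unfolding E' by simp qed
  have ecd: "{c,d} \<in> E'" unfolding E' by simp
  have h2: "HL V' E' b d 2" unfolding HL_def
  proof (rule exI[of _ "[b,a,d]"])
    have "is_path V' E' [b,a,d]" using ds eba ead V' by (simp add: is_path_walk)
    then show "is_path V' E' [b,a,d] \<and> hd [b,a,d] = b \<and> last [b,a,d] = d \<and> (length [b,a,d] - 1) mod 3 = 2"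
      by simp
  qed
  have h1: "HL V' E' b d 1"
  proof -
    obtain P where P: "is_path V E P" "hd P = x" "last P = y" "(length P - 1) mod 3 = 0"
      using A(1) unfolding HL_def by metis
    have Pw: "P \<noteq> []" "distinct P" "set P \<subseteq> V" "walk E' P"
      using P(1) walk_mono[of E P E'] E' by (auto simp: is_path_walk)
    let ?Q = "b # (a # P @ [c]) @ [d]"
    have "walk E' (a # P @ [c])" unfolding walk3 using Pw P(2,3) eax' eyc by simp
    moreover have "distinct (b # (a # P @ [c]) @ [d])" using Pw nV ds by auto
    moreover have "set (b # (a # P @ [c]) @ [d]) \<subseteq> V'" using Pw V' by auto
    ultimately have "is_path V' E' ?Q" unfolding path3 using eba ecd by simp
    moreover have "(length ?Q - 1) mod 3 = 1" using m3e[OF P(4)] Pw(1) by (cases P) (simp_all add: add.commute)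
    ultimately show ?thesis unfolding HL_def by (intro exI[of _ ?Q]) auto
  qed
  have Fv: "\<And>u w. {u,w} \<in> ?F \<Longrightarrow> u \<in> {a,b,c,d} \<or> w \<in> {a,b,c,d}" by (auto simp: doubleton_eq_iff)
  have no: "NO V' E' b d 0" unfolding NO_def
  proof (intro allI impI)
    fix s assume s: "is_path V' E' s" "hd s = b" "last s = d"
    obtain m where m: "s = b # m @ [d]" using path_decomp[OF s] ds by auto
    have Sm: "distinct (b # m @ [d])" "set (b # m @ [d]) \<subseteq> V'"
     "(m = [] \<longrightarrow> {b,d} \<in> E')" "(m \<noteq> [] \<longrightarrow> {b, hd m} \<in> E' \<and> walk E' m \<and> {last m, d} \<in> E')"
      using s(1) unfolding m path3 by auto
    have mne: "m \<noteq> []" using Sm(3) nbd by auto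
    have hm: "hd m \<in> {a,c}" using Sm(4) mne nb by (simp add: mem_nbrs[symmetric])
    have lm: "last m \<in> {a,c}" using Sm(4) mne nd by (simp add: mem_nbrs[symmetric] insert_commute)
    show "(length s - 1) mod 3 \<noteq> 0"
    proof (cases "length m \<ge> 2")
      case False
      have "length m \<noteq> 0" using mne by simp
      then have "length m = 1" using False by linarith
      then show ?thesis using m by simp
    next
      case True
      have hl: "hd m \<noteq> last m" using hd_last_distinct Sm(1) True by auto
      have key: "(length s - 1) mod 3 \<noteq> 0"
        if c1: "hd m = u1" "last m = u2" "u1 \<noteq> u2" "u1 \<in> {a,c}" "u2 \<in> {a,c}"
          and c2: "\<forall>z \<in> nbrs E' u1. z \<in> {b,d} \<or> z = w1"
          and c3: "\<forall>z \<in> nbrs E' u2. z \<in> {b,d} \<or> z = w2"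
          and c4: "{w1,w2} = {x,y}" "{u1,u2} \<notin> E'"
        for u1 u2 w1 w2
      proof -
        obtain m2 where m2: "m = u1 # m2 @ [u2]" using list_decomp[OF mne c1(1,2,3)] by auto
        have W: "(m2 = [] \<longrightarrow> {u1,u2} \<in> E')" "(m2 \<noteq> [] \<longrightarrow> {u1, hd m2} \<in> E' \<and> walk E' m2 \<and> {last m2, u2} \<in> E')"
          using Sm(4) mne unfolding m2 walk3 by auto
        have m2ne: "m2 \<noteq> []" using W(1) c4(2) by auto
        have dm: "distinct (b # (u1 # m2 @ [u2]) @ [d])" using Sm(1) m2 by simp
        have m2abcd: "set m2 \<inter> {a,b,c,d} = {}" using dm c1(4,5) by auto
        have "hd m2 \<in> nbrs E' u1" using W(2) m2ne by (simp add: mem_nbrs)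
        moreover have "hd m2 \<notin> {b,d}" using m2abcd m2ne hd_in_set by blast
        ultimately have h2: "hd m2 = w1" using c2 by blast
        have "last m2 \<in> nbrs E' u2" using W(2) m2ne by (simp add: mem_nbrs insert_commute)
        moreover have "last m2 \<notin> {b,d}" using m2abcd m2ne last_in_set by blast
        ultimately have l2: "last m2 = w2" using c3 by blast
        have wm: "walk E m2"
          by (rule walk_restrict[of E ?F m2 "{a,b,c,d}"]) (use W(2) m2ne m2abcd E' Fv in auto)
        have "set m2 \<subseteq> V" using Sm(2) m m2 m2abcd V' by auto
        then have pm: "is_path V E m2" using wm dm m2ne by (simp add: is_path_walk)
        have ls: "length s - 1 = (length m2 - 1) + 4" using m m2 m2ne by (cases m2) auto
        have "(length m2 - 1) mod 3 \<noteq> 2"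
        proof (cases "w1 = x")
          case True
          then have "w2 = y" using c4(1) dd by (auto simp: doubleton_eq_iff)
          then show ?thesis using A(3) pm h2 l2 True unfolding NO_def by blast
        next
          case False
          then have "w1 = y" "w2 = x" using c4(1) dd by (auto simp: doubleton_eq_iff)
          moreover have "is_path V E (rev m2)" using pm by (rule is_path_rev)
          ultimately show ?thesis using A(3) h2 l2 m2ne unfolding NO_def
            by (metis hd_rev last_rev length_rev)
        qed
        from m3c[OF this] ls show ?thesis by simp
      qed
      have nac: "{a,c} \<notin> E'" "{c,a} \<notin> E'" using na ds ds2 by (auto simp: mem_nbrs[symmetric] insert_commute)
      show ?thesis
      proof (cases "hd m = a")
        case True
        then have "last m = c" using hl lm by auto
        show ?thesis by (rule key[of a c x y]) (use True \<open>last m = c\<close> ds na nc nac in auto)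
      next
        case False
        then have "hd m = c" "last m = a" using hl lm hm by auto
        show ?thesis by (rule key[of c a y x]) (use \<open>hd m = c\<close> \<open>last m = a\<close> ds na nc nac in \<open>auto simp: insert_commute\<close>)
      qed
    qed
  qed
  have eax: "{x,a} \<in> E'" "{a,b} \<in> E'" "{a,d} \<in> E'" using E' by auto
  have Eb: "\<And>k. HL V E r x k \<Longrightarrow> HL (V' - {d}) (del_vertex_edges d E') r b ((k+2) mod 3)"
    using HL_ext2[OF _ nV(1) nV(2) ds(1) nV(4) ds(3)[symmetric] ds(5)[symmetric] eax(1) eax(2) sub(1) sub(2)] .
  have Ed: "\<And>k. HL V E r x k \<Longrightarrow> HL (V' - {b}) (del_vertex_edges b E') r d ((k+2) mod 3)"
    using HL_ext2[OF _ nV(1) nV(4) ds(3) nV(2) ds(1)[symmetric] ds(5) eax(1) eax(3) sub(1) sub(3)] .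
  have R: "HL (V' - {d}) (del_vertex_edges d E') r b 0" "HL (V' - {d}) (del_vertex_edges d E') r b 1"
     "HL (V' - {d}) (del_vertex_edges d E') r b 2"
     "HL (V' - {b}) (del_vertex_edges b E') r d 0" "HL (V' - {b}) (del_vertex_edges b E') r d 1"
     "HL (V' - {b}) (del_vertex_edges b E') r d 2"
    using Eb[OF Bx(2)] Eb[OF Bx(3)] Eb[OF Bx(1)] Ed[OF Bx(2)] Ed[OF Bx(3)] Ed[OF Bx(1)] by (simp_all add: numeral_2_eq_2)
  have R2: "HL V' E' r b 1" "HL V' E' r b 2" "HL V' E' r d 1" "HL V' E' r d 2"
    using HL_dve[OF R(2)] HL_dve[OF R(3)] HL_dve[OF R(5)] HL_dve[OF R(6)] by simp_all
  have dist': "distinct [r,b,d]" using ds ds2 by simp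
  have inV': "r \<in> V'" "b \<in> V'" "d \<in> V'" using inV V' by auto
  have nbd': "nbrs E' b = nbrs E' d" using nb nd by simp
  have bb': "\<not> is_K23 V' E' \<longrightarrow> BB r V' E' b d" unfolding BB_def using R by blast
  show ?thesis unfolding Inv_def
    by (intro conjI disjI1; (rule wf' dist' inV' dr db ddd dg3' nbd nbd' h1 h2 no R2 bb')?)
qed



lemma K23_perm1: "K23_on V E a1 a2 b1 b2 b3 \<Longrightarrow> K23_on V E a1 a2 b2 b1 b3"
proof -
  assume "K23_on V E a1 a2 b1 b2 b3"
  then have d: "distinct [a1, a2, b1, b2, b3]" and V: "V = {a1, a2, b1, b2, b3}"
    and E: "E = {{a, b} | a b. a \<in> {a1, a2} \<and> b \<in> {b1, b2, b3}}" unfolding K23_on_def by auto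
  have s1: "{b2,b1,b3} = {b1,b2,b3}" by blast
  have s2: "{a1,a2,b2,b1,b3} = {a1,a2,b1,b2,b3}" by blast
  show ?thesis unfolding K23_on_def s1 s2 using d V E by auto
qed

lemma K23_perm2: "K23_on V E a1 a2 b1 b2 b3 \<Longrightarrow> K23_on V E a1 a2 b3 b1 b2"
proof -
  assume "K23_on V E a1 a2 b1 b2 b3"
  then have d: "distinct [a1, a2, b1, b2, b3]" and V: "V = {a1, a2, b1, b2, b3}"
    and E: "E = {{a, b} | a b. a \<in> {a1, a2} \<and> b \<in> {b1, b2, b3}}" unfolding K23_on_def by auto
  have s1: "{b3,b1,b2} = {b1,b2,b3}" by blast
  have s2: "{a1,a2,b3,b1,b2} = {a1,a2,b1,b2,b3}" by blast
  show ?thesis unfolding K23_on_def s1 s2 using d V E by auto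
qed

lemma reach_inv: "exc_reach r V E \<Longrightarrow> r \<in> V2 V E \<Longrightarrow> \<exists>x y. Inv r V E x y"
proof (induction rule: exc_reach.induct)
  case (base V E a1 a2 b1 b2 b3)
  have "V2 V E = {b1,b2,b3}" using Inv_V2[OF K23_base[OF base.hyps]] .
  then have "r = b1 \<or> r = b2 \<or> r = b3" using base.prems by auto
  then show ?case
  proof (elim disjE)
    assume "r = b1" then show ?thesis using K23_base[OF base.hyps] by blast
  next
    assume "r = b2" then show ?thesis using K23_base[OF K23_perm1[OF base.hyps]] by blast
  next
    assume "r = b3" then show ?thesis using K23_base[OF K23_perm2[OF base.hyps]] by blast
  qed
next
  case (step V E x y V' E')
  have st: "distinct [r, x, y]" "r \<in> V2 V E" "x \<in> V2 V E" "y \<in> V2 V E"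
    using step.hyps(2) unfolding exc_step_def by auto
  obtain x0 y0 where I0: "Inv r V E x0 y0" using step.IH st(2) by blast
  have V2e: "V2 V E = {r,x0,y0}" using Inv_V2[OF I0] .
  have I: "Inv r V E x y"
  proof (cases "x = x0")
    case True
    then have "y = y0" using st V2e by auto
    then show ?thesis using I0 True by simp
  next
    case False
    then have "x = y0" "y = x0" using st V2e by auto
    then show ?thesis using Inv_sym[OF I0] by simp
  qed
  have dr: "deg E' r = 2" using step.prems unfolding V2_def by auto
  have cases: "({x, y} \<notin> E \<and>
         (\<exists>p q. p \<notin> V \<and> q \<notin> V \<and> p \<noteq> q \<and> V' = V \<union> {p, q} \<and>
                E' = E \<union> {{x, p}, {p, q}, {q, y}}))
     \<or> ({x, y} \<in> E \<and>
         ((\<exists>v w. v \<notin> V \<and> w \<in> {x, y} \<and> V' = insert v V \<and>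
                 E' = E \<union> {{v, u} | u. u \<in> nbrs E w})
          \<or> (\<exists>a b c d. distinct [a, b, c, d] \<and> {a, b, c, d} \<inter> V = {} \<and>
                 V' = V \<union> {a, b, c, d} \<and>
                 E' = E \<union> {{a, b}, {b, c}, {c, d}, {d, a}, {a, x}, {c, y}})))"
    using step.hyps(2) unfolding exc_step_def by blast
  then show ?case
  proof (elim disjE conjE exE)
    fix p q assume h: "{x,y} \<notin> E" "p \<notin> V" "q \<notin> V" "p \<noteq> q" "V' = V \<union> {p, q}"
      "E' = E \<union> {{x, p}, {p, q}, {q, y}}"
    have "Inv r V' E' p q" by (rule step1[OF I h])
    then show ?thesis by blast
  next
    fix v w assume h: "{x,y} \<in> E" "v \<notin> V" "w \<in> {x, y}" "V' = insert v V"
      "E' = E \<union> {{v, u} | u. u \<in> nbrs E w}"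
    show ?thesis
    proof (cases "w = x")
      case True
      then have "Inv r V' E' x v" using step_twin[OF I h(1) h(2) h(4) _ dr] h(5) by simp
      then show ?thesis by blast
    next
      case False
      then have "w = y" using h(3) by auto
      moreover have "{y,x} \<in> E" using h(1) by (simp add: insert_commute)
      ultimately have "Inv r V' E' y v" using step_twin[OF Inv_sym[OF I] _ h(2) h(4) _ dr] h(5) by simp
      then show ?thesis by blast
    qed
  next
    fix a b c d assume h: "{x,y} \<in> E" "distinct [a, b, c, d]" "{a, b, c, d} \<inter> V = {}"
      "V' = V \<union> {a, b, c, d}" "E' = E \<union> {{a, b}, {b, c}, {c, d}, {d, a}, {a, x}, {c, y}}"
    have "Inv r V' E' b d" by (rule step_cyc[OF I h])
    then show ?thesis by blast
  qed
qed

lemma sm_two: "(\<exists>l\<in>S. l mod 3 = i) \<Longrightarrow> (\<exists>l\<in>S. l mod 3 = j) \<Longrightarrow> i < 3 \<Longrightarrow> j < 3 \<Longrightarrow>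
   subset_mod 3 {i,j} S"
  unfolding subset_mod_def
proof
  fix a assume h: "\<exists>l\<in>S. l mod 3 = i" "\<exists>l\<in>S. l mod 3 = j" "i < 3" "j < 3" "a \<in> {i,j}"
  show "\<exists>b\<in>S. a mod 3 = b mod 3"
  proof (cases "a = i")
    case True
    then show ?thesis using h(1,3) by auto
  next
    case False
    then have "a = j" using h(5) by auto
    then show ?thesis using h(2,4) by auto
  qed
qed

lemma HL_pl: "HL V E u w k \<Longrightarrow> \<exists>l\<in>path_lengths V E u w. l mod 3 = k"
  unfolding HL_def path_lengths_def by blast

lemma NO_pl: "NO V E u w k \<Longrightarrow> \<forall>l\<in>path_lengths V E u w. l mod 3 \<noteq> k"
  unfolding NO_def path_lengths_def by blast

lemma equiv12: "HL V E u w 1 \<Longrightarrow> HL V E u w 2 \<Longrightarrow> NO V E u w 0 \<Longrightarrow> equiv_mod 3 (path_lengths V E u w) {1,2}"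
proof -
  assume h: "HL V E u w 1" "HL V E u w 2" "NO V E u w 0"
  have a: "subset_mod 3 (path_lengths V E u w) {1,2}" unfolding subset_mod_def
  proof
    fix l assume "l \<in> path_lengths V E u w"
    then have "l mod 3 \<noteq> 0" using NO_pl[OF h(3)] by blast
    then have "l mod 3 = 1 \<or> l mod 3 = 2" by linarith
    then show "\<exists>b\<in>{1,2}. l mod 3 = b mod 3" by auto
  qed
  have b: "subset_mod 3 {1,2} (path_lengths V E u w)"
    by (rule sm_two[OF HL_pl[OF h(1)] HL_pl[OF h(2)]]) auto
  show ?thesis using a b unfolding equiv_mod_def by blast
qed

lemma equiv01: "HL V E u w 0 \<Longrightarrow> HL V E u w 1 \<Longrightarrow> NO V E u w 2 \<Longrightarrow> equiv_mod 3 (path_lengths V E u w) {0,1}"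
proof -
  assume h: "HL V E u w 0" "HL V E u w 1" "NO V E u w 2"
  have a: "subset_mod 3 (path_lengths V E u w) {0,1}" unfolding subset_mod_def
  proof
    fix l assume "l \<in> path_lengths V E u w"
    then have "l mod 3 \<noteq> 2" using NO_pl[OF h(3)] by blast
    then have "l mod 3 = 0 \<or> l mod 3 = 1" by linarith
    then show "\<exists>b\<in>{0,1}. l mod 3 = b mod 3" by auto
  qed
  have b: "subset_mod 3 {0,1} (path_lengths V E u w)"
    by (rule sm_two[OF HL_pl[OF h(1)] HL_pl[OF h(2)]]) auto
  show ?thesis using a b unfolding equiv_mod_def by blast
qed

lemma BB_sm: "BB r V E x y \<Longrightarrow>
  subset_mod 3 {0, 2} (path_lengths (V - {y}) (del_vertex_edges y E) r x) \<and>
  subset_mod 3 {0, 2} (path_lengths (V - {x}) (del_vertex_edges x E) r y)"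
proof -
  assume "BB r V E x y"
  then have h: "HL (V-{y}) (del_vertex_edges y E) r x 0" "HL (V-{y}) (del_vertex_edges y E) r x 2"
     "HL (V-{x}) (del_vertex_edges x E) r y 0" "HL (V-{x}) (del_vertex_edges x E) r y 2"
    unfolding BB_def by auto
  show ?thesis using sm_two[OF HL_pl[OF h(1)] HL_pl[OF h(2)]] sm_two[OF HL_pl[OF h(3)] HL_pl[OF h(4)]] by simp
qed

theorem lemma3p2:
  fixes V :: "'a set" and E :: "'a set set" and r x y :: 'a
  assumes "exceptional V E r"
    and "V2 V E - {r} = {x, y}"
  shows "(({x, y} \<notin> E \<and> nbrs E x = nbrs E y \<and>
            equiv_mod 3 (path_lengths V E x y) {1, 2})
         \<or> ({x, y} \<in> E \<and> equiv_mod 3 (path_lengths V E x y) {0, 1}))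
       \<and> (\<not> is_K23 V E \<longrightarrow>
            subset_mod 3 {0, 2} (path_lengths (V - {y}) (del_vertex_edges y E) r x) \<and>
            subset_mod 3 {0, 2} (path_lengths (V - {x}) (del_vertex_edges x E) r y))"
proof -
  have R: "exc_reach r V E" "r \<in> V2 V E" using assms(1) unfolding exceptional_def by auto
  obtain x0 y0 where I0: "Inv r V E x0 y0" using reach_inv[OF R] by blast
  have d0: "distinct [r,x0,y0]" using I0 unfolding Inv_def by blast
  have "V2 V E - {r} = {x0,y0}" using Inv_V2[OF I0] d0 by auto
  then have "{x,y} = {x0,y0}" using assms(2) by simp
  then have "(x = x0 \<and> y = y0) \<or> (x = y0 \<and> y = x0)" by (simp add: doubleton_eq_iff)
  then have I: "Inv r V E x y"
  proof
    assume "x = x0 \<and> y = y0" then show ?thesis using I0 by simp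
  next
    assume "x = y0 \<and> y = x0" then show ?thesis using Inv_sym[OF I0] by simp
  qed
  have C: "({x,y} \<notin> E \<and> nbrs E x = nbrs E y \<and> HL V E x y 1 \<and> HL V E x y 2 \<and> NO V E x y 0 \<and>
        (\<not> is_K23 V E \<longrightarrow> BB r V E x y))
      \<or> ({x,y} \<in> E \<and> HL V E x y 0 \<and> HL V E x y 1 \<and> NO V E x y 2 \<and> BB r V E x y)"
    using I unfolding Inv_def by blast
  then show ?thesis
  proof (elim disjE conjE)
    assume h: "{x,y} \<notin> E" "nbrs E x = nbrs E y" "HL V E x y 1" "HL V E x y 2" "NO V E x y 0"
      "\<not> is_K23 V E \<longrightarrow> BB r V E x y"
    have e: "equiv_mod 3 (path_lengths V E x y) {1, 2}" by (rule equiv12[OF h(3,4,5)])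
    have k: "\<not> is_K23 V E \<longrightarrow>
            subset_mod 3 {0, 2} (path_lengths (V - {y}) (del_vertex_edges y E) r x) \<and>
            subset_mod 3 {0, 2} (path_lengths (V - {x}) (del_vertex_edges x E) r y)"
    proof
      assume "\<not> is_K23 V E"
      then have "BB r V E x y" using h(6) by blast
      then show "subset_mod 3 {0, 2} (path_lengths (V - {y}) (del_vertex_edges y E) r x) \<and>
            subset_mod 3 {0, 2} (path_lengths (V - {x}) (del_vertex_edges x E) r y)" by (rule BB_sm)
    qed
    show ?thesis using h(1,2) e k by blast
  next
    assume h: "{x,y} \<in> E" "HL V E x y 0" "HL V E x y 1" "NO V E x y 2" "BB r V E x y"
    show ?thesis using h equiv01[OF h(2,3,4)] BB_sm[OF h(5)] by blast
  qed
qed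

end
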